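(* Let $A$ be a real symmetric $n\times n$ matrix with smallest eigenvalue $\bar\lambda$, let $a,x_0,b_2,\dots,b_m\in\mathbb{R}^n$, $\alpha>0$, $\beta_2,\dots,\beta_m\in\mathbb{R}$, and define $f(x)=x^TAx+a^Tx$, $h_1(x)=\|x-x_0\|^2-\alpha$, $h_i(x)=b_i^Tx-\beta_i$ for $i=2,\dots,m$. Assume (H4) the system $Av-\bar\lambda v=0$, $b_i^Tv=0$ ($i=2,\dots,m$) has a nonzero solution $v\in\mathbb{R}^n$. Then the system $Av-\bar\lambda v=0$, $(a+2\bar\lambda x_0)^Tv\le 0$, $b_i^Tv\le 0$ ($i=2,\dots,m$) has a nonzero solution, and the set $\mathrm{U}(f,h_1,\dots,h_m)$ is convex.
   Context: $\mathrm{U}(f,h_1,\dots,h_m):=\{(f(x),h_1(x),\dots,h_m(x)) : x\in\mathbb{R}^n\}+\mathbb{R}^{m+1}_+\subset\mathbb{R}^{m+1}$. *)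

theory Defs
  imports "HOL-Analysis.Analysis"
begin

text \<open>Points of R^(m+1) are represented as functions nat => real whose
coordinates 0..m are the relevant ones and all other coordinates are 0.\<close>

definition Uset :: "('x \<Rightarrow> real) \<Rightarrow> (nat \<Rightarrow> 'x \<Rightarrow> real) \<Rightarrow> nat \<Rightarrow> (nat \<Rightarrow> real) set" where
  "Uset f h m = {y. \<exists>x d. (\<forall>j\<le>m. d j \<ge> 0) \<and>
      y = (\<lambda>j. if j = 0 then f x + d 0 else if j \<le> m then h j x + d j else 0)}"

definition convex_Rvec :: "(nat \<Rightarrow> real) set \<Rightarrow> bool" where
  "convex_Rvec S \<longleftrightarrow> (\<forall>u\<in>S. \<forall>v\<in>S. \<forall>t::real. 0 \<le> t \<and> t \<le> 1 \<longrightarrow>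
      (\<lambda>j. (1 - t) * u j + t * v j) \<in> S)"

definition is_eigenvalue :: "real^'n^'n \<Rightarrow> real \<Rightarrow> bool" where
  "is_eigenvalue A mu \<longleftrightarrow> (\<exists>v. v \<noteq> 0 \<and> A *v v = mu *\<^sub>R v)"

end

theory Submission
  imports Defs
begin

lemma sym_inner:
  fixes A :: "real^'n^'n"
  assumes "transpose A = A"
  shows "x \<bullet> (A *v y) = (A *v x) \<bullet> y"
proof -
  have "x \<bullet> (A *v y) = (x v* A) \<bullet> y" by (simp add: dot_lmul_matrix)
  also have "x v* A = transpose A *v x" by simp
  finally show ?thesis using assms by simp
qed

lemma psd_min:
  fixes A :: "real^'n^'n"
  assumes symm: "transpose A = A"
    and lam_min: "\<And>mu. is_eigenvalue A mu \<Longrightarrow> lam \<le> mu"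
  shows "lam * (u \<bullet> u) \<le> u \<bullet> (A *v u)"
proof -
  let ?Q = "\<lambda>u::real^'n. u \<bullet> (A *v u)"
  have cont: "continuous_on (sphere 0 1) ?Q"
    by (intro continuous_intros continuous_on_compose2[OF matrix_vector_mul_bounded_linear[THEN linear_continuous_on]]) auto
  obtain e :: "real^'n" where e: "norm e = 1" using vector_choose_size[of 1] by auto
  then have ne: "sphere (0::real^'n) 1 \<noteq> {}" by auto
  obtain u0 where u0: "u0 \<in> sphere 0 1" and u0min: "\<And>y. y \<in> sphere 0 1 \<Longrightarrow> ?Q u0 \<le> ?Q y"
    using continuous_attains_inf[OF compact_sphere ne cont] by blast
  define mu where "mu = ?Q u0"
  have u0n: "u0 \<bullet> u0 = 1" using u0 by (simp add: dot_square_norm)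
  have P: "mu * (w \<bullet> w) \<le> ?Q w" for w
  proof (cases "w = 0")
    case True then show ?thesis by simp
  next
    case False
    define c where "c = inverse (norm w)"
    have cpos: "c > 0" using False by (simp add: c_def)
    have "c *\<^sub>R w \<in> sphere 0 1" using False by (simp add: c_def)
    then have "mu \<le> ?Q (c *\<^sub>R w)" unfolding mu_def by (rule u0min)
    also have "?Q (c *\<^sub>R w) = c^2 * ?Q w" by (simp add: matrix_vector_mult_scaleR power2_eq_square)
    finally have 1: "mu \<le> c^2 * ?Q w" .
    have "c^2 * (w \<bullet> w) = 1" using False by (simp add: c_def dot_square_norm field_simps)
    then have "mu * (w \<bullet> w) \<le> c^2 * ?Q w * (w \<bullet> w)" using 1 by (simp add: mult_right_mono)
    also have "\<dots> = ?Q w" using \<open>c^2 * (w \<bullet> w) = 1\<close> by (metis mult.commute mult.left_commute mult_1_right)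
    finally show ?thesis .
  qed
  define r where "r = A *v u0 - mu *\<^sub>R u0"
  have r0: "r = 0"
  proof (rule ccontr)
    assume "r \<noteq> 0"
    define t where "t = r \<bullet> r"
    define p where "p = ?Q r - mu * (r \<bullet> r)"
    have tpos: "t > 0" using \<open>r \<noteq> 0\<close> by (simp add: t_def)
    have p0: "p \<ge> 0" using P[of r] by (simp add: p_def)
    define s where "s = - t / (p + 1)"
    have ex: "?Q (u0 + s *\<^sub>R r) - mu * ((u0 + s *\<^sub>R r) \<bullet> (u0 + s *\<^sub>R r)) = 2 * s * t + s^2 * p"
    proof -
      have a: "u0 \<bullet> (A *v r) = (A *v u0) \<bullet> r" using sym_inner[OF symm] .
      have e1: "?Q (u0 + s *\<^sub>R r) = ?Q u0 + s * (u0 \<bullet> (A *v r)) + s * (r \<bullet> (A *v u0)) + s^2 * ?Q r"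
        by (simp add: matrix_vector_right_distrib matrix_vector_mult_scaleR inner_add_left inner_add_right power2_eq_square algebra_simps)
      have e2: "(u0 + s *\<^sub>R r) \<bullet> (u0 + s *\<^sub>R r) = u0 \<bullet> u0 + 2 * s * (u0 \<bullet> r) + s^2 * (r \<bullet> r)"
        by (simp add: inner_add_left inner_add_right power2_eq_square algebra_simps inner_commute)
      have e3: "t = r \<bullet> (A *v u0) - mu * (u0 \<bullet> r)"
        by (simp add: t_def r_def inner_diff_left inner_commute) 
            have ru: "r \<bullet> u0 = u0 \<bullet> r" by (rule inner_commute)
      have ra: "(A *v u0) \<bullet> r = r \<bullet> (A *v u0)" by (rule inner_commute)
      show ?thesis unfolding e1 e2 e3 p_def mu_def a u0n ra
        by (simp add: power2_eq_square) algebra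
    qed
    have "2 * s * t + s^2 * p < 0"
    proof -
      have "(2 * s * t + s^2 * p) * (p+1)^2 = -(t^2 * (p + 2))"
      proof -
        have sp: "s * (p+1) = -t" using p0 by (simp add: s_def)
        have "(2 * s * t + s^2 * p) * (p+1)^2 = 2*t*(s*(p+1))*(p+1) + (s*(p+1))^2 * p"
          by (simp add: power2_eq_square algebra_simps)
        also have "\<dots> = -(t^2 * (p + 2))" unfolding sp by (simp add: power2_eq_square algebra_simps)
        finally show ?thesis .
      qed
      moreover have "-(t^2 * (p + 2)) < 0" using tpos p0 by (simp add: mult_pos_pos)
      ultimately show ?thesis using p0
        by (metis add_nonneg_pos zero_less_one mult_less_0_iff not_square_less_zero power2_eq_square mult_neg_pos)
    qed
    with ex P[of "u0 + s *\<^sub>R r"] show False by linarith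
  qed
  have "is_eigenvalue A mu"
    unfolding is_eigenvalue_def using r0 u0 by (intro exI[of _ u0]) (auto simp: r_def)
  then have "lam \<le> mu" by (rule lam_min)
  then have "lam * (u \<bullet> u) \<le> mu * (u \<bullet> u)" by (simp add: mult_right_mono)
  with P[of u] show ?thesis by linarith
qed
lemma combo_A:
  fixes A :: "real^'n^'n"
  shows "(1-t) * (x \<bullet> (A *v x)) + t * (y \<bullet> (A *v y))
     - ((1-t) *\<^sub>R x + t *\<^sub>R y) \<bullet> (A *v ((1-t) *\<^sub>R x + t *\<^sub>R y))
     = t * (1-t) * ((x - y) \<bullet> (A *v (x - y)))"
  by (simp add: inner_add_left inner_add_right inner_diff_left inner_diff_right
      matrix_vector_right_distrib matrix_vector_mult_diff_distrib matrix_vector_mult_scaleR algebra_simps power2_eq_square)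

lemma combo_I:
  fixes x y :: "'a::real_inner"
  shows "(1-t) * (x \<bullet> x) + t * (y \<bullet> y)
     - ((1-t) *\<^sub>R x + t *\<^sub>R y) \<bullet> ((1-t) *\<^sub>R x + t *\<^sub>R y)
     = t * (1-t) * ((x - y) \<bullet> (x - y))"
  by (simp add: inner_add_left inner_add_right inner_diff_left inner_diff_right
      algebra_simps power2_eq_square inner_commute)

theorem proposition3p3:
  fixes A :: "real^'n^'n" and a x0 :: "real^'n" and b :: "nat \<Rightarrow> real^'n"
    and alpha lam :: real and beta :: "nat \<Rightarrow> real" and m :: nat
    and f :: "real^'n \<Rightarrow> real" and h :: "nat \<Rightarrow> real^'n \<Rightarrow> real"
  assumes m: "m \<ge> 1"
    and symm: "transpose A = A"
    and lam_eig: "is_eigenvalue A lam"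
    and lam_min: "\<And>mu. is_eigenvalue A mu \<Longrightarrow> lam \<le> mu"
    and alpha: "alpha > 0"
    and f_def: "\<And>x. f x = x \<bullet> (A *v x) + a \<bullet> x"
    and h1_def: "\<And>x. h 1 x = (norm (x - x0))\<^sup>2 - alpha"
    and hi_def: "\<And>i x. i \<in> {2..m} \<Longrightarrow> h i x = b i \<bullet> x - beta i"
    and H4: "\<exists>v. v \<noteq> 0 \<and> A *v v - lam *\<^sub>R v = 0 \<and> (\<forall>i\<in>{2..m}. b i \<bullet> v = 0)"
  shows "(\<exists>v. v \<noteq> 0 \<and> A *v v - lam *\<^sub>R v = 0 \<and> (a + (2 * lam) *\<^sub>R x0) \<bullet> v \<le> 0
             \<and> (\<forall>i\<in>{2..m}. b i \<bullet> v \<le> 0))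
         \<and> convex_Rvec (Uset f h m)"
proof -
  obtain v0 where v0: "v0 \<noteq> 0" "A *v v0 - lam *\<^sub>R v0 = 0" "\<forall>i\<in>{2..m}. b i \<bullet> v0 = 0"
    using H4 by blast
  obtain v where v: "v \<noteq> 0" "A *v v = lam *\<^sub>R v" "\<forall>i\<in>{2..m}. b i \<bullet> v = 0"
    and vc: "(a + (2 * lam) *\<^sub>R x0) \<bullet> v \<le> 0"
  proof (cases "(a + (2 * lam) *\<^sub>R x0) \<bullet> v0 \<le> 0")
    case True then show ?thesis using that v0 by auto
  next
    case False
    have "A *v (- v0) = (-1) *\<^sub>R (A *v v0)" using matrix_vector_mult_scaleR[of A "-1" v0] by simp
    then have "A *v (- v0) = lam *\<^sub>R (- v0)" using v0(2) by simp
    then show ?thesis using that[of "- v0"] v0 False by auto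
  qed
  have part1: "\<exists>v. v \<noteq> 0 \<and> A *v v - lam *\<^sub>R v = 0 \<and> (a + (2 * lam) *\<^sub>R x0) \<bullet> v \<le> 0
             \<and> (\<forall>i\<in>{2..m}. b i \<bullet> v \<le> 0)"
    using v vc by (intro exI[of _ v]) auto
  define c where "c = (a + (2 * lam) *\<^sub>R x0) \<bullet> v"
  define N where "N = v \<bullet> v"
  have Npos: "N > 0" using v(1) by (simp add: N_def)
  have "convex_Rvec (Uset f h m)"
    unfolding convex_Rvec_def
  proof (intro ballI allI impI)
    fix uu vv and t :: real
    assume uu: "uu \<in> Uset f h m" and vv: "vv \<in> Uset f h m" and t: "0 \<le> t \<and> t \<le> 1"
    obtain x d where d: "\<forall>j\<le>m. d j \<ge> 0" and uu_eq: "uu = (\<lambda>j. if j = 0 then f x + d 0 else if j \<le> m then h j x + d j else 0)"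
      using uu unfolding Uset_def by blast
    obtain y e where e: "\<forall>j\<le>m. e j \<ge> 0" and vv_eq: "vv = (\<lambda>j. if j = 0 then f y + e 0 else if j \<le> m then h j y + e j else 0)"
      using vv unfolding Uset_def by blast
    define w where "w = (1-t) *\<^sub>R x + t *\<^sub>R y"
    define del where "del = t * (1-t) * ((x - y) \<bullet> (x - y))"
    have del0: "del \<ge> 0" using t by (simp add: del_def)
    have h1w: "(1-t) * h 1 x + t * h 1 y - h 1 w = del"
    proof -
      have eqw: "(1-t) *\<^sub>R (x - x0) + t *\<^sub>R (y - x0) = w - x0" by (simp add: w_def algebra_simps)
      have eqd: "(x - x0) - (y - x0) = x - y" by simp
      have "(1-t) * h 1 x + t * h 1 y - h 1 w = (1-t) * ((x - x0) \<bullet> (x - x0)) + t * ((y - x0) \<bullet> (y - x0)) - (w - x0) \<bullet> (w - x0)"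
        unfolding h1_def power2_norm_eq_inner by algebra
      then show ?thesis using combo_I[of t "x - x0" "y - x0", unfolded eqw eqd] by (simp add: del_def)
    qed
    have fw: "(1-t) * f x + t * f y - f w = t * (1-t) * ((x - y) \<bullet> (A *v (x - y)))"
      using combo_A[of t x A y] unfolding f_def w_def
      by (simp add: inner_add_right algebra_simps)
    have psd: "lam * ((x - y) \<bullet> (x - y)) \<le> (x - y) \<bullet> (A *v (x - y))"
      by (rule psd_min[OF symm lam_min])
    have fw2: "(1-t) * f x + t * f y - f w \<ge> lam * del"
    proof -
      have "t*(1-t) \<ge> 0" using t by simp
      from mult_left_mono[OF psd this]
      show ?thesis unfolding fw del_def by (simp add: algebra_simps)
    qed
    define p where "p = (w - x0) \<bullet> v"
    define s where "s = (- p + sqrt (p^2 + N * del)) / N"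
    have sq: "sqrt (p^2 + N * del) \<ge> \<bar>p\<bar>"
      using Npos del0 by (simp add: real_le_rsqrt)
    have s0: "s \<ge> 0" using sq Npos by (simp add: s_def)
    have seq: "2 * s * p + s^2 * N = del"
    proof -
      define r where "r = sqrt (p^2 + N * del)"
      have r2: "r^2 = p^2 + N * del" using Npos del0 by (simp add: r_def)
      have "s * N = r - p" using Npos by (simp add: s_def r_def)
      have "(2 * s * p + s^2 * N) * N = 2 * p * (s * N) + (s * N)^2"
        by (simp add: power2_eq_square algebra_simps)
      also have "\<dots> = 2 * p * (r - p) + (r - p)^2" unfolding \<open>s * N = r - p\<close> ..
      also have "\<dots> = N * del" using r2 by (simp add: power2_eq_square algebra_simps)
      finally show ?thesis using Npos by simp
    qed
    define z where "z = w + s *\<^sub>R v"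
    have h1z: "h 1 z = (1-t) * h 1 x + t * h 1 y"
    proof -
      have "h 1 z = h 1 w + 2 * s * p + s^2 * N"
        unfolding h1_def z_def power2_norm_eq_inner p_def N_def
        by (simp add: inner_add_left inner_add_right inner_diff_left inner_diff_right algebra_simps power2_eq_square inner_commute)
      then show ?thesis using seq h1w by simp
    qed
    have fz: "f z = f w + lam * del + s * c"
    proof -
      have Av: "A *v v = lam *\<^sub>R v" by (rule v(2))
      have vw: "v \<bullet> (A *v w) = lam * (v \<bullet> w)"
        using sym_inner[OF symm, of v w] Av by (simp add: inner_commute)
      have F: "f z = f w + 2 * s * lam * (w \<bullet> v) + s^2 * lam * N + s * (a \<bullet> v)"
        unfolding f_def z_def N_def
        by (simp add: inner_add_left inner_add_right matrix_vector_right_distrib matrix_vector_mult_scaleR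
            Av vw algebra_simps power2_eq_square inner_commute)
      have D: "del = 2 * s * (w \<bullet> v) - 2 * s * (x0 \<bullet> v) + s^2 * N"
        using seq by (simp add: p_def inner_diff_left algebra_simps)
      have X: "lam * del = 2 * s * lam * (w \<bullet> v) - 2 * s * lam * (x0 \<bullet> v) + s^2 * lam * N"
        unfolding D by (simp add: algebra_simps)
      have C: "s * c = s * (a \<bullet> v) + 2 * s * lam * (x0 \<bullet> v)" by (simp add: c_def inner_add_left algebra_simps)
      show ?thesis using F X C by linarith
    qed
    have fle: "f z \<le> (1-t) * f x + t * f y"
    proof -
      have "s * c \<le> 0" using s0 vc by (simp add: c_def mult_nonneg_nonpos)
      then show ?thesis using fz fw2 by linarith
    qed
    have blin: "b i \<bullet> z = (1-t) * (b i \<bullet> x) + t * (b i \<bullet> y)" if "i \<in> {2..m}" for i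
      using v(3) that by (simp add: z_def w_def inner_add_right)
    define D where "D = (\<lambda>j. (1-t) * uu j + t * vv j - (if j = 0 then f z else h j z))"
    show "(\<lambda>j. (1 - t) * uu j + t * vv j) \<in> Uset f h m"
      unfolding Uset_def
    proof (intro CollectI exI[of _ z] exI[of _ D] conjI allI impI)
      fix j assume j: "j \<le> m"
      show "0 \<le> D j"
      proof -
        have nn: "(1-t) * d j \<ge> 0" "t * e j \<ge> 0" using d e t j by auto
        consider "j = 0" | "j = 1" | "j \<in> {2..m}" using j by fastforce
        then show ?thesis
        proof cases
          case 1
          then have "D j = (1-t) * f x + t * f y - f z + ((1-t) * d j + t * e j)"
            by (simp add: D_def uu_eq vv_eq algebra_simps)
          then show ?thesis using fle nn by linarith
        next
          case 2
          then have "D j = (1-t) * h 1 x + t * h 1 y - h 1 z + ((1-t) * d j + t * e j)"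
            using m by (simp add: D_def uu_eq vv_eq algebra_simps)
          then show ?thesis using h1z nn by linarith
        next
          case 3
          then have "D j = (1-t) * h j x + t * h j y - h j z + ((1-t) * d j + t * e j)"
            using j by (simp add: D_def uu_eq vv_eq algebra_simps)
          moreover have "(1-t) * h j x + t * h j y - h j z = 0"
            unfolding hi_def[OF 3] blin[OF 3] by (simp add: algebra_simps)
          ultimately show ?thesis using nn by linarith
        qed
      qed
    next
      show "(\<lambda>j. (1 - t) * uu j + t * vv j) =
        (\<lambda>j. if j = 0 then f z + D 0 else if j \<le> m then h j z + D j else 0)"
        by (rule ext) (simp add: D_def uu_eq vv_eq)
    qed
  qed
  with part1 show ?thesis by blast
qed

end
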